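(* Let $k\ge2$, $n\ge1$, $m=kn-1$, and let $\varphi\in C^\infty(\mathbb P_m\mathbb C)$ be $g$-admissible and $G_{n,k}$-invariant. Then for all real $0<\zeta,\gamma\le1$, $$(\varphi-\psi)([1,\zeta^{[n-1]},\gamma^{[(k-1)n]}])\ge(\varphi-\psi)([1,\dots,1]),$$ where $\zeta^{[d]}=(\zeta,\dots,\zeta)\in\mathbb C^d$.
   Context: Homogeneous coordinates on $\mathbb P_m\mathbb C$, $m=kn-1$, are written $[z_0,\dots,z_m]=[Z_0,\dots,Z_{k-1}]$ with blocks $Z_h=(z_{hn},\dots,z_{(h+1)n-1})$. The metric $g$ has components $g_{\lambda\bar\mu}=a_m\,\partial^2\ln(1+|z_1|^2+\cdots+|z_m|^2)/\partial z_\lambda\partial\bar z_\mu$ in the chart $\{z_0=1\}$, for a fixed $a_m>0$. $\varphi$ is $g$-admissible if $g_{\lambda\bar\mu}+\partial^2\varphi/\partial z_\lambda\partial\bar z_\mu$ is positive definite everywhere. $G_{n,k}$ is the automorphism group generated by swaps of two blocks $Z_i,Z_j$, multiplication of a single coordinate $z_p$ by $e^{i\theta}$, and transpositions of two coordinates in the same block. $\psi([z_0,\dots,z_m])=\ln\big((|z_0|\cdots|z_m|)^{2a_m/(m+1)}/(|z_0|^2+\cdots+|z_m|^2)^{a_m}\big)$, defined where all $z_p\ne0$. *)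

theory Defs
  imports "HOL-Analysis.Analysis"
begin

fun Ck_on :: "nat \<Rightarrow> 'a::euclidean_space set \<Rightarrow> ('a \<Rightarrow> real) \<Rightarrow> bool" where
  "Ck_on 0 S f = continuous_on S f"
| "Ck_on (Suc k) S f = (f differentiable_on S \<and> continuous_on S f \<and>
      (\<forall>u. Ck_on k S (\<lambda>z. frechet_derivative f (at z) u)))"

definition smooth_on :: "'a::euclidean_space set \<Rightarrow> ('a \<Rightarrow> real) \<Rightarrow> bool" where
  "smooth_on S f = (\<forall>k. Ck_on k S f)"

definition dD :: "('a::real_normed_vector \<Rightarrow> real) \<Rightarrow> 'a \<Rightarrow> 'a \<Rightarrow> real" where
  "dD f z u = frechet_derivative f (at z) u"

definition dD2 :: "('a::real_normed_vector \<Rightarrow> real) \<Rightarrow> 'a \<Rightarrow> 'a \<Rightarrow> 'a \<Rightarrow> real" where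
  "dD2 f z u v = dD (\<lambda>w. dD f w u) z v"

text \<open>Wirtinger second derivative  d^2 f / (dz_l d conj(z_mu))  of a real function on C^I:
  (1/4) (f_{x_l x_mu} + f_{y_l y_mu} + i (f_{x_l y_mu} - f_{y_l x_mu})).\<close>
definition wirt2 :: "(complex^'i \<Rightarrow> real) \<Rightarrow> complex^'i \<Rightarrow> 'i \<Rightarrow> 'i \<Rightarrow> complex" where
  "wirt2 f z l m =
     (complex_of_real (dD2 f z (axis l 1) (axis m 1) + dD2 f z (axis l \<i>) (axis m \<i>))
      + \<i> * complex_of_real (dD2 f z (axis l 1) (axis m \<i>) - dD2 f z (axis l \<i>) (axis m 1))) / 4"

definition posdef_on :: "('i::finite \<Rightarrow> 'i \<Rightarrow> complex) \<Rightarrow> (complex^'i) set \<Rightarrow> bool" where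
  "posdef_on H W = ((\<forall>l m. H l m = cnj (H m l)) \<and>
     (\<forall>v\<in>W. v \<noteq> 0 \<longrightarrow> 0 < Re (\<Sum>l\<in>UNIV. \<Sum>m\<in>UNIV. H l m * v $ l * cnj (v $ m))))"

text \<open>Functions on P_m C are represented as functions on C^(m+1) - {0} invariant under
  nonzero complex scaling.\<close>
definition proj_fun :: "(complex^'i \<Rightarrow> real) \<Rightarrow> bool" where
  "proj_fun f = (\<forall>c z. c \<noteq> 0 \<longrightarrow> z \<noteq> 0 \<longrightarrow> f (c *s z) = f z)"

text \<open>g-admissibility: in every affine chart {z_j = 1} of P_m C, the matrix
  g_{l mu} + d^2 phi/dz_l d conj(z_mu) is positive definite. The metric g is the
  Fubini-Study-type form a_m dd^c ln |Z|^2; in the chart {z_j = 1} (coordinates z_q, q \<noteq> j)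
  its components are a_m d^2 ln(1 + sum_{q\<noteq>j} |z_q|^2)/dz_l d conj(z_mu), which is the
  restriction to the hyperplane {v_j = 0} of the Wirtinger Hessian of a_m ln |Z|^2
  at a point with z_j = 1 (for j = z_0 this is literally the formula of the paper).\<close>
definition admissible :: "real \<Rightarrow> (complex^'i::finite \<Rightarrow> real) \<Rightarrow> bool" where
  "admissible a \<phi> = (\<forall>j z. z $ j = 1 \<longrightarrow>
      posdef_on (wirt2 (\<lambda>w. a * ln (\<Sum>q\<in>UNIV. (cmod (w $ q))\<^sup>2) + \<phi> w) z) {v. v $ j = 0})"

text \<open>Coordinates: z_p = z $ idx p for p < k*n, where idx is a fixed bijection
  {0..<k*n} \<rightarrow> 'i.  Permutation of coordinates by a permutation s of {0..<k*n}.\<close>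
definition perm_coords :: "(nat \<Rightarrow> 'i) \<Rightarrow> nat \<Rightarrow> (nat \<Rightarrow> nat) \<Rightarrow> complex^'i \<Rightarrow> complex^'i" where
  "perm_coords idx N s z = (\<chi> q. z $ idx (s (inv_into {0..<N} idx q)))"

definition block_swap :: "nat \<Rightarrow> nat \<Rightarrow> nat \<Rightarrow> nat \<Rightarrow> nat" where
  "block_swap n i j p =
     (if p div n = i then j * n + p mod n else if p div n = j then i * n + p mod n else p)"

definition phase_coord :: "(nat \<Rightarrow> 'i) \<Rightarrow> nat \<Rightarrow> real \<Rightarrow> complex^'i \<Rightarrow> complex^'i" where
  "phase_coord idx p \<theta> z = (\<chi> q. if q = idx p then cis \<theta> * z $ q else z $ q)"

inductive_set Gnk :: "(nat \<Rightarrow> 'i) \<Rightarrow> nat \<Rightarrow> nat \<Rightarrow> (complex^'i \<Rightarrow> complex^'i) set"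
  for idx :: "nat \<Rightarrow> 'i" and n k :: nat where
  id: "id \<in> Gnk idx n k"
| swap: "g \<in> Gnk idx n k \<Longrightarrow> i < k \<Longrightarrow> j < k \<Longrightarrow>
           perm_coords idx (k*n) (block_swap n i j) \<circ> g \<in> Gnk idx n k"
| phase: "g \<in> Gnk idx n k \<Longrightarrow> p < k*n \<Longrightarrow> phase_coord idx p \<theta> \<circ> g \<in> Gnk idx n k"
| transp: "g \<in> Gnk idx n k \<Longrightarrow> p < k*n \<Longrightarrow> q < k*n \<Longrightarrow> p div n = q div n \<Longrightarrow>
           perm_coords idx (k*n) (Transposition.transpose p q) \<circ> g \<in> Gnk idx n k"

definition G_invariant :: "(nat \<Rightarrow> 'i) \<Rightarrow> nat \<Rightarrow> nat \<Rightarrow> (complex^'i \<Rightarrow> real) \<Rightarrow> bool" where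
  "G_invariant idx n k \<phi> = (\<forall>g\<in>Gnk idx n k. \<forall>z. z \<noteq> 0 \<longrightarrow> \<phi> (g z) = \<phi> z)"

definition psi :: "real \<Rightarrow> complex^'i::finite \<Rightarrow> real" where
  "psi a z = ln ((\<Prod>q\<in>UNIV. cmod (z $ q)) powr (2 * a / real CARD('i))
                 / (\<Sum>q\<in>UNIV. (cmod (z $ q))\<^sup>2) powr a)"

definition pt :: "(nat \<Rightarrow> 'i) \<Rightarrow> nat \<Rightarrow> nat \<Rightarrow> real \<Rightarrow> real \<Rightarrow> complex^'i" where
  "pt idx n N \<zeta> \<gamma> = (\<chi> q. let p = inv_into {0..<N} idx q in
      if p = 0 then 1 else if p < n then complex_of_real \<zeta> else complex_of_real \<gamma>)"

end

theory Submission
  imports Defs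
begin

definition mk :: "('i::finite \<Rightarrow> real) \<Rightarrow> ('i \<Rightarrow> real) \<Rightarrow> complex^'i" where
  "mk A B = (\<Sum>q\<in>UNIV. A q *\<^sub>R axis q (1::complex) + B q *\<^sub>R axis q \<i>)"

lemma mk_nth[simp]: "mk A B $ l = Complex (A l) (B l)"
  by (simp add: mk_def axis_def complex_eq_iff if_distrib cong: if_cong)

lemma mk_Re_Im: "v = mk (\<lambda>l. Re (v $ l)) (\<lambda>l. Im (v $ l))"
  by (simp add: vec_eq_iff complex_eq_iff)

lemma lin_decomp:
  fixes L :: "complex^'i::finite \<Rightarrow> real"
  assumes "linear L"
  shows "L v = (\<Sum>l\<in>UNIV. Re (v $ l) * L (axis l 1) + Im (v $ l) * L (axis l \<i>))"
proof -
  have "L v = L (mk (\<lambda>l. Re (v $ l)) (\<lambda>l. Im (v $ l)))" using mk_Re_Im[of v] by simp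
  also have "\<dots> = (\<Sum>l\<in>UNIV. Re (v $ l) * L (axis l 1) + Im (v $ l) * L (axis l \<i>))"
    unfolding mk_def using assms
    by (simp add: linear_sum linear_add linear_scale)
  finally show ?thesis .
qed

lemma mk_deriv:
  assumes "\<And>q. ((\<lambda>s. A s q) has_real_derivative A' q) (at t)"
    and "\<And>q. ((\<lambda>s. B s q) has_real_derivative B' q) (at t)"
  shows "((\<lambda>s. mk (A s) (B s)) has_vector_derivative mk A' B') (at t)"
  unfolding mk_def
  by (auto intro!: derivative_eq_intros assms)


lemma comp_deriv:
  fixes F :: "complex^'i::finite \<Rightarrow> real"
  assumes "F differentiable at (\<gamma> t)"
    and "(\<gamma> has_vector_derivative g1) (at t)"
  shows "((\<lambda>s. F (\<gamma> s)) has_real_derivative frechet_derivative F (at (\<gamma> t)) g1) (at t)"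
proof -
  have F: "(F has_derivative frechet_derivative F (at (\<gamma> t))) (at (\<gamma> t))"
    using assms(1) frechet_derivative_works by blast
  have lin: "linear (frechet_derivative F (at (\<gamma> t)))"
    using assms(1) linear_frechet_derivative by blast
  have g: "(\<gamma> has_derivative (\<lambda>h. h *\<^sub>R g1)) (at t)"
    using assms(2) by (simp add: has_vector_derivative_def)
  have "((F \<circ> \<gamma>) has_derivative (frechet_derivative F (at (\<gamma> t)) \<circ> (\<lambda>h. h *\<^sub>R g1))) (at t)"
    by (rule diff_chain_at[OF g F])
  moreover have "(frechet_derivative F (at (\<gamma> t)) \<circ> (\<lambda>h. h *\<^sub>R g1)) = (\<lambda>h. frechet_derivative F (at (\<gamma> t)) g1 * h)"
    using lin by (auto simp: fun_eq_iff linear_scale)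
  ultimately show ?thesis
    by (simp add: has_field_derivative_def o_def)
qed

lemma chain2:
  fixes u :: "complex^'i::finite \<Rightarrow> real"
  assumes du: "\<And>s. u differentiable at (mk (A s) (B s))"
  and dd1: "\<And>l. (\<lambda>w. frechet_derivative u (at w) (axis l 1)) differentiable at (mk (A t) (B t))"
  and ddi: "\<And>l. (\<lambda>w. frechet_derivative u (at w) (axis l \<i>)) differentiable at (mk (A t) (B t))"
  and dA: "\<And>q. ((\<lambda>s. A s q) has_real_derivative A1 t q) (at t)"
  and dB: "\<And>q. ((\<lambda>s. B s q) has_real_derivative B1 t q) (at t)"
  and dA1: "\<And>q. ((\<lambda>s. A1 s q) has_real_derivative A2 q) (at t)"
  and dB1: "\<And>q. ((\<lambda>s. B1 s q) has_real_derivative B2 q) (at t)"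
  shows "((\<lambda>s. frechet_derivative u (at (mk (A s) (B s))) (mk (A1 s) (B1 s))) has_real_derivative
     (frechet_derivative u (at (mk (A t) (B t))) (mk A2 B2) +
      (\<Sum>l\<in>UNIV. A1 t l * dD2 u (mk (A t) (B t)) (axis l 1) (mk (A1 t) (B1 t))
               + B1 t l * dD2 u (mk (A t) (B t)) (axis l \<i>) (mk (A1 t) (B1 t))))) (at t)"
proof -
  define \<gamma> where "\<gamma> s = mk (A s) (B s)" for s
  have gd: "(\<gamma> has_vector_derivative mk (A1 t) (B1 t)) (at t)"
    unfolding \<gamma>_def by (rule mk_deriv[OF dA dB])
  have eq: "(\<lambda>s. frechet_derivative u (at (mk (A s) (B s))) (mk (A1 s) (B1 s))) =
    (\<lambda>s. \<Sum>l\<in>UNIV. A1 s l * frechet_derivative u (at (\<gamma> s)) (axis l 1)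
        + B1 s l * frechet_derivative u (at (\<gamma> s)) (axis l \<i>))"
  proof
    fix s
    show "frechet_derivative u (at (mk (A s) (B s))) (mk (A1 s) (B1 s)) =
      (\<Sum>l\<in>UNIV. A1 s l * frechet_derivative u (at (\<gamma> s)) (axis l 1)
        + B1 s l * frechet_derivative u (at (\<gamma> s)) (axis l \<i>))"
      using lin_decomp[OF linear_frechet_derivative[OF du[of s]], of "mk (A1 s) (B1 s)"]
      by (simp add: \<gamma>_def)
  qed
  have d1: "((\<lambda>s. frechet_derivative u (at (\<gamma> s)) (axis l 1)) has_real_derivative
      dD2 u (\<gamma> t) (axis l 1) (mk (A1 t) (B1 t))) (at t)" for l
    using comp_deriv[of "\<lambda>w. frechet_derivative u (at w) (axis l 1)" \<gamma> t, OF _ gd] dd1[of l]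
    by (simp add: \<gamma>_def dD2_def dD_def)
  have di: "((\<lambda>s. frechet_derivative u (at (\<gamma> s)) (axis l \<i>)) has_real_derivative
      dD2 u (\<gamma> t) (axis l \<i>) (mk (A1 t) (B1 t))) (at t)" for l
    using comp_deriv[of "\<lambda>w. frechet_derivative u (at w) (axis l \<i>)" \<gamma> t, OF _ gd] ddi[of l]
    by (simp add: \<gamma>_def dD2_def dD_def)
  have "((\<lambda>s. \<Sum>l\<in>UNIV. A1 s l * frechet_derivative u (at (\<gamma> s)) (axis l 1)
        + B1 s l * frechet_derivative u (at (\<gamma> s)) (axis l \<i>)) has_real_derivative
      (\<Sum>l\<in>UNIV. (A1 t l * dD2 u (\<gamma> t) (axis l 1) (mk (A1 t) (B1 t)) + A2 l * frechet_derivative u (at (\<gamma> t)) (axis l 1))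
        + (B1 t l * dD2 u (\<gamma> t) (axis l \<i>) (mk (A1 t) (B1 t)) + B2 l * frechet_derivative u (at (\<gamma> t)) (axis l \<i>)))) (at t)"
  proof (intro DERIV_sum DERIV_add)
    fix l
    show "((\<lambda>s. A1 s l * frechet_derivative u (at (\<gamma> s)) (axis l 1)) has_real_derivative
      A1 t l * dD2 u (\<gamma> t) (axis l 1) (mk (A1 t) (B1 t)) + A2 l * frechet_derivative u (at (\<gamma> t)) (axis l 1)) (at t)"
      using DERIV_mult[OF dA1 d1] by (simp add: algebra_simps)
    show "((\<lambda>s. B1 s l * frechet_derivative u (at (\<gamma> s)) (axis l \<i>)) has_real_derivative
      B1 t l * dD2 u (\<gamma> t) (axis l \<i>) (mk (A1 t) (B1 t)) + B2 l * frechet_derivative u (at (\<gamma> t)) (axis l \<i>)) (at t)"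
      using DERIV_mult[OF dB1 di] by (simp add: algebra_simps)
  qed
  moreover have "frechet_derivative u (at (\<gamma> t)) (mk A2 B2) =
      (\<Sum>l\<in>UNIV. A2 l * frechet_derivative u (at (\<gamma> t)) (axis l 1) + B2 l * frechet_derivative u (at (\<gamma> t)) (axis l \<i>))"
    using lin_decomp[OF linear_frechet_derivative[OF du[of t]], of "mk A2 B2"] by (simp add: \<gamma>_def)
  ultimately show ?thesis
    unfolding eq by (simp add: \<gamma>_def sum.distrib algebra_simps)
qed


lemma dD2_decomp:
  fixes u :: "complex^'i::finite \<Rightarrow> real"
  assumes "(\<lambda>w. frechet_derivative u (at w) b) differentiable at z"
  shows "dD2 u z b (mk P R) = (\<Sum>m\<in>UNIV. P m * dD2 u z b (axis m 1) + R m * dD2 u z b (axis m \<i>))"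
  unfolding dD2_def dD_def
  using lin_decomp[OF linear_frechet_derivative[OF assms], of "mk P R"] by simp

lemma quad_identity:
  fixes u :: "complex^'i::finite \<Rightarrow> real"
  assumes d1: "\<And>l. (\<lambda>w. frechet_derivative u (at w) (axis l 1)) differentiable at z"
  and di: "\<And>l. (\<lambda>w. frechet_derivative u (at w) (axis l \<i>)) differentiable at z"
  shows "(\<Sum>l\<in>UNIV. P l * dD2 u z (axis l 1) (mk P R) + R l * dD2 u z (axis l \<i>) (mk P R))
       + (\<Sum>l\<in>UNIV. (- R l) * dD2 u z (axis l 1) (mk (\<lambda>l. - R l) P) + P l * dD2 u z (axis l \<i>) (mk (\<lambda>l. - R l) P))
       = 4 * Re (\<Sum>l\<in>UNIV. \<Sum>m\<in>UNIV. wirt2 u z l m * mk P R $ l * cnj (mk P R $ m))"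
proof -
  define A where "A l m = dD2 u z (axis l 1) (axis m 1)" for l m
  define B where "B l m = dD2 u z (axis l \<i>) (axis m \<i>)" for l m
  define C where "C l m = dD2 u z (axis l 1) (axis m \<i>)" for l m
  define D where "D l m = dD2 u z (axis l \<i>) (axis m 1)" for l m
  have lhs: "(\<Sum>l\<in>UNIV. P l * dD2 u z (axis l 1) (mk P R) + R l * dD2 u z (axis l \<i>) (mk P R))
       + (\<Sum>l\<in>UNIV. (- R l) * dD2 u z (axis l 1) (mk (\<lambda>l. - R l) P) + P l * dD2 u z (axis l \<i>) (mk (\<lambda>l. - R l) P))
     = (\<Sum>l\<in>UNIV. \<Sum>m\<in>UNIV. (P l * P m + R l * R m) * (A l m + B l m)
          + (P l * R m - R l * P m) * (C l m - D l m))"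
    unfolding dD2_decomp[OF d1] dD2_decomp[OF di]
    by (simp add: A_def B_def C_def D_def sum_distrib_left sum.distrib[symmetric] algebra_simps)
  have rhs: "4 * Re (\<Sum>l\<in>UNIV. \<Sum>m\<in>UNIV. wirt2 u z l m * mk P R $ l * cnj (mk P R $ m))
     = (\<Sum>l\<in>UNIV. \<Sum>m\<in>UNIV. (P l * P m + R l * R m) * (A l m + B l m)
          + (P l * R m - R l * P m) * (C l m - D l m))"
    apply (simp add: Re_sum sum_distrib_left wirt2_def A_def B_def C_def D_def algebra_simps)
    apply (intro sum.cong refl)
    apply (simp add: field_simps)
    done
  show ?thesis using lhs rhs by simp
qed


lemma sum_cmod_inner: "(\<Sum>q\<in>UNIV. (cmod (w $ q))\<^sup>2) = w \<bullet> w"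
  by (simp add: inner_vec_def power2_norm_eq_inner)

lemma smooth2:
  fixes \<phi> :: "complex^'i::finite \<Rightarrow> real"
  assumes "smooth_on (- {0}) \<phi>" and "z \<noteq> 0"
  shows "\<phi> differentiable at z" "(\<lambda>w. frechet_derivative \<phi> (at w) b) differentiable at z"
proof -
  have "Ck_on (Suc (Suc 0)) (- {0}) \<phi>" using assms(1) unfolding smooth_on_def by blast
  then have a: "\<phi> differentiable_on (- {0})" and b: "(\<lambda>w. frechet_derivative \<phi> (at w) b) differentiable_on (- {0})"
    by auto
  show "\<phi> differentiable at z" using a assms(2) differentiable_on_eq_differentiable_at[of "- {0}"] by auto
  show "(\<lambda>w. frechet_derivative \<phi> (at w) b) differentiable at z"
    using b assms(2) differentiable_on_eq_differentiable_at[of "- {0}"] by auto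
qed

lemma ln_part_deriv:
  fixes w :: "complex^'i::finite"
  assumes "w \<noteq> 0"
  shows "((\<lambda>w. ln (\<Sum>q\<in>UNIV. (cmod (w $ q))\<^sup>2)) has_derivative (\<lambda>h. (w \<bullet> h + h \<bullet> w) / (w \<bullet> w))) (at w)"
proof -
  have pos: "w \<bullet> w > 0" using assms by simp
  have "((\<lambda>w. ln (w \<bullet> w)) has_derivative (\<lambda>h. (w \<bullet> h + h \<bullet> w) / (w \<bullet> w))) (at w)"
    using pos by (auto intro!: derivative_eq_intros simp: field_simps)
  then show ?thesis by (simp add: sum_cmod_inner)
qed

lemma U_diff:
  fixes \<phi> :: "complex^'i::finite \<Rightarrow> real"
  assumes sm: "smooth_on (- {0}) \<phi>" and z: "z \<noteq> 0"
  shows "(\<lambda>w. a * ln (\<Sum>q\<in>UNIV. (cmod (w $ q))\<^sup>2) + \<phi> w) differentiable at z"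
    "(\<lambda>w. frechet_derivative (\<lambda>w. a * ln (\<Sum>q\<in>UNIV. (cmod (w $ q))\<^sup>2) + \<phi> w) (at w) b) differentiable at z"
proof -
  let ?u = "\<lambda>w. a * ln (\<Sum>q\<in>UNIV. (cmod (w $ q))\<^sup>2) + \<phi> w"
  have hd: "(?u has_derivative (\<lambda>h. a * ((w \<bullet> h + h \<bullet> w) / (w \<bullet> w)) + frechet_derivative \<phi> (at w) h)) (at w)"
    if "w \<noteq> 0" for w
    using has_derivative_add[OF has_derivative_mult_right[OF ln_part_deriv[OF that], of a]
        smooth2(1)[OF sm that, unfolded frechet_derivative_works]]
    by simp
  show "?u differentiable at z" using hd[OF z] differentiableI by blast
  have fe: "frechet_derivative ?u (at w) b = a * ((w \<bullet> b + b \<bullet> w) / (w \<bullet> w)) + frechet_derivative \<phi> (at w) b"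
    if "w \<in> - {0}" for w
  proof -
    have "w \<noteq> 0" using that by simp
    from frechet_derivative_at[OF hd[OF this]] show ?thesis by metis
  qed
  have "((\<lambda>w. a * ((w \<bullet> b + b \<bullet> w) / (w \<bullet> w)) + frechet_derivative \<phi> (at w) b) has_derivative
     (\<lambda>h. a * (((h \<bullet> b + b \<bullet> h) * (z \<bullet> z) - (z \<bullet> b + b \<bullet> z) * (z \<bullet> h + h \<bullet> z)) / (z \<bullet> z)^2)
       + frechet_derivative (\<lambda>w. frechet_derivative \<phi> (at w) b) (at z) h)) (at z)"
    using z smooth2(2)[OF sm z, of b] frechet_derivative_works
    by (auto intro!: derivative_eq_intros simp: field_simps power2_eq_square)
  then have "((\<lambda>w. frechet_derivative ?u (at w) b) has_derivative
     (\<lambda>h. a * (((h \<bullet> b + b \<bullet> h) * (z \<bullet> z) - (z \<bullet> b + b \<bullet> z) * (z \<bullet> h + h \<bullet> z)) / (z \<bullet> z)^2)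
       + frechet_derivative (\<lambda>w. frechet_derivative \<phi> (at w) b) (at z) h)) (at z)"
    by (rule has_derivative_transform_within_open[of _ _ _ _ "- {0}"]) (use z fe in auto)
  then show "(\<lambda>w. frechet_derivative ?u (at w) b) differentiable at z" using differentiableI by blast
qed


definition uu :: "real \<Rightarrow> (complex^'i::finite \<Rightarrow> real) \<Rightarrow> complex^'i \<Rightarrow> real" where
  "uu a \<phi> = (\<lambda>w. a * ln (\<Sum>q\<in>UNIV. (cmod (w $ q))\<^sup>2) + \<phi> w)"

definition EE :: "real^'i::finite \<Rightarrow> complex^'i" where
  "EE X = mk (\<lambda>q. exp (X $ q)) (\<lambda>q. 0)"

lemma mk_nonzero: "mk (\<lambda>q. exp (f q)) B \<noteq> 0"
proof
  assume "mk (\<lambda>q. exp (f q)) B = 0"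
  then have "mk (\<lambda>q. exp (f q)) B $ undefined = 0" by simp
  then show False by (simp add: complex_eq_iff)
qed

lemma mk_nonzero2: "mk (\<lambda>q. exp (f q) * cos (g q)) (\<lambda>q. exp (f q) * sin (g q)) \<noteq> 0"
proof
  assume "mk (\<lambda>q. exp (f q) * cos (g q)) (\<lambda>q. exp (f q) * sin (g q)) = 0"
  then have "mk (\<lambda>q. exp (f q) * cos (g q)) (\<lambda>q. exp (f q) * sin (g q)) $ undefined = 0" by simp
  then have "cos (g undefined) = 0 \<and> sin (g undefined) = 0" by (simp add: complex_eq_iff)
  then show False using sin_cos_squared_add[of "g undefined"] by simp
qed

lemma g2_nonneg:
  fixes \<phi> :: "complex^'i::finite \<Rightarrow> real"
  assumes sm: "smooth_on (- {0}) \<phi>" and adm: "admissible a \<phi>"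
    and rot: "\<And>\<theta> z. z \<noteq> 0 \<Longrightarrow> \<phi> (\<chi> q. cis (\<theta> q) * z $ q) = \<phi> z"
    and Xj: "X $ j = 0" and dj: "d $ j = 0"
  shows "\<exists>D. ((\<lambda>s. frechet_derivative (uu a \<phi>) (at (mk (\<lambda>q. exp (X $ q + s * d $ q)) (\<lambda>q. 0)))
                    (mk (\<lambda>q. d $ q * exp (X $ q + s * d $ q)) (\<lambda>q. 0))) has_real_derivative D) (at t) \<and> D \<ge> 0"
proof -
  define r where "r = (\<lambda>q. exp (X $ q + t * d $ q))"
  define z where "z = mk r (\<lambda>q. 0)"
  define P where "P = (\<lambda>q. d $ q * r q)"
  define A2 where "A2 = (\<lambda>q. d $ q * d $ q * r q)"
  have dr1: "((\<lambda>s. exp (X $ q + s * d $ q)) has_real_derivative d $ q * exp (X $ q + t * d $ q)) (at t)" for q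
    by (auto intro!: derivative_eq_intros)
  have dr2: "((\<lambda>s. d $ q * exp (X $ q + s * d $ q)) has_real_derivative d $ q * d $ q * exp (X $ q + t * d $ q)) (at t)" for q
    by (auto intro!: derivative_eq_intros)
  let ?u = "uu a \<phi>"
  have z0: "z \<noteq> 0" unfolding z_def r_def by (rule mk_nonzero)
  have ud: "?u differentiable at w" if "w \<noteq> 0" for w
    unfolding uu_def by (rule U_diff(1)[OF sm that])
  have udd: "(\<lambda>w. frechet_derivative ?u (at w) b) differentiable at z" for b
    unfolding uu_def by (rule U_diff(2)[OF sm z0])
  have g2: "((\<lambda>s. frechet_derivative ?u (at (mk (\<lambda>q. exp (X $ q + s * d $ q)) (\<lambda>q. 0)))
                    (mk (\<lambda>q. d $ q * exp (X $ q + s * d $ q)) (\<lambda>q. 0))) has_real_derivative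
      (frechet_derivative ?u (at z) (mk A2 (\<lambda>q. 0)) +
       (\<Sum>l\<in>UNIV. P l * dD2 ?u z (axis l 1) (mk P (\<lambda>q. 0)) + 0 * dD2 ?u z (axis l \<i>) (mk P (\<lambda>q. 0))))) (at t)"
    using chain2[of ?u "\<lambda>s q. exp (X $ q + s * d $ q)" "\<lambda>s q. 0" t
        "\<lambda>s q. d $ q * exp (X $ q + s * d $ q)" "\<lambda>s q. 0" A2 "\<lambda>q. 0"]
    by (simp add: ud mk_nonzero udd[unfolded z_def r_def] z_def r_def P_def A2_def dr1 dr2)
  define A where "A = (\<lambda>s q. r q * cos (s * d $ q))"
  define B where "B = (\<lambda>s q. r q * sin (s * d $ q))"
  define A1 where "A1 = (\<lambda>s q. - (d $ q * r q * sin (s * d $ q)))"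
  define B1 where "B1 = (\<lambda>s q. d $ q * r q * cos (s * d $ q))"
  have dA: "((\<lambda>s. A s q) has_real_derivative A1 s0 q) (at s0)" for q s0
    unfolding A_def A1_def by (auto intro!: derivative_eq_intros)
  have dB: "((\<lambda>s. B s q) has_real_derivative B1 s0 q) (at s0)" for q s0
    unfolding B_def B1_def by (auto intro!: derivative_eq_intros)
  have dA1: "((\<lambda>s. A1 s q) has_real_derivative - A2 q) (at 0)" for q
    unfolding A1_def A2_def by (auto intro!: derivative_eq_intros)
  have dB1: "((\<lambda>s. B1 s q) has_real_derivative 0) (at 0)" for q
    unfolding B1_def by (auto intro!: derivative_eq_intros)
  have Cnz: "mk (A s) (B s) \<noteq> 0" for s
    unfolding A_def B_def r_def
    by (rule mk_nonzero2[of "\<lambda>q. X $ q + t * d $ q" "\<lambda>q. s * d $ q"])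
  have C0: "mk (A 0) (B 0) = z" unfolding A_def B_def z_def by simp
  have Crot: "mk (A s) (B s) = (\<chi> q. cis (s * d $ q) * z $ q)" for s
    unfolding A_def B_def z_def by (simp add: vec_eq_iff complex_eq_iff)
  have hconst: "?u (mk (A s) (B s)) = ?u z" for s
    unfolding Crot uu_def using rot[OF z0, of "\<lambda>q. s * d $ q"]
    by (simp add: norm_mult)
  have h1: "((\<lambda>s. ?u (mk (A s) (B s))) has_real_derivative
      frechet_derivative ?u (at (mk (A s0) (B s0))) (mk (A1 s0) (B1 s0))) (at s0)" for s0
    by (rule comp_deriv[OF ud[OF Cnz] mk_deriv[OF dA dB]])
  have h1z: "frechet_derivative ?u (at (mk (A s0) (B s0))) (mk (A1 s0) (B1 s0)) = 0" for s0
  proof -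
    have "((\<lambda>s. ?u (mk (A s) (B s))) has_real_derivative 0) (at s0)"
      unfolding hconst by (rule DERIV_const)
    with h1[of s0] show ?thesis using DERIV_unique by blast
  qed
  have h2: "((\<lambda>s. frechet_derivative ?u (at (mk (A s) (B s))) (mk (A1 s) (B1 s))) has_real_derivative
     (frechet_derivative ?u (at (mk (A 0) (B 0))) (mk (\<lambda>q. - A2 q) (\<lambda>q. 0)) +
      (\<Sum>l\<in>UNIV. A1 0 l * dD2 ?u (mk (A 0) (B 0)) (axis l 1) (mk (A1 0) (B1 0))
               + B1 0 l * dD2 ?u (mk (A 0) (B 0)) (axis l \<i>) (mk (A1 0) (B1 0))))) (at 0)"
    by (rule chain2[OF ud[OF Cnz] _ _ dA dB dA1 dB1]) (use udd C0 in auto)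
  have h2z: "frechet_derivative ?u (at z) (mk (\<lambda>q. - A2 q) (\<lambda>q. 0)) +
      (\<Sum>l\<in>UNIV. (- 0) * dD2 ?u z (axis l 1) (mk (\<lambda>l. - 0) P)
               + P l * dD2 ?u z (axis l \<i>) (mk (\<lambda>l. - 0) P)) = 0"
  proof -
    have "((\<lambda>s. frechet_derivative ?u (at (mk (A s) (B s))) (mk (A1 s) (B1 s))) has_real_derivative 0) (at 0)"
      unfolding h1z by (rule DERIV_const)
    with h2 have "frechet_derivative ?u (at (mk (A 0) (B 0))) (mk (\<lambda>q. - A2 q) (\<lambda>q. 0)) +
      (\<Sum>l\<in>UNIV. A1 0 l * dD2 ?u (mk (A 0) (B 0)) (axis l 1) (mk (A1 0) (B1 0))
               + B1 0 l * dD2 ?u (mk (A 0) (B 0)) (axis l \<i>) (mk (A1 0) (B1 0))) = 0"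
      using DERIV_unique by blast
    moreover have "A1 0 = (\<lambda>l. - 0)" "B1 0 = P" unfolding A1_def B1_def P_def by auto
    ultimately show ?thesis using C0 by (simp only:)
  qed
  have lin: "frechet_derivative ?u (at z) (mk A2 (\<lambda>q. 0)) + frechet_derivative ?u (at z) (mk (\<lambda>q. - A2 q) (\<lambda>q. 0)) = 0"
    using lin_decomp[OF linear_frechet_derivative[OF ud[OF z0]], of "mk A2 (\<lambda>q. 0)"]
      lin_decomp[OF linear_frechet_derivative[OF ud[OF z0]], of "mk (\<lambda>q. - A2 q) (\<lambda>q. 0)"]
    by (simp add: sum_negf)
  have Q: "(\<Sum>l\<in>UNIV. P l * dD2 ?u z (axis l 1) (mk P (\<lambda>l. 0)) + 0 * dD2 ?u z (axis l \<i>) (mk P (\<lambda>l. 0)))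
       + (\<Sum>l\<in>UNIV. (- 0) * dD2 ?u z (axis l 1) (mk (\<lambda>l. - 0) P) + P l * dD2 ?u z (axis l \<i>) (mk (\<lambda>l. - 0) P))
       = 4 * Re (\<Sum>l\<in>UNIV. \<Sum>m\<in>UNIV. wirt2 ?u z l m * mk P (\<lambda>l. 0) $ l * cnj (mk P (\<lambda>l. 0) $ m))"
    by (rule quad_identity[of ?u z P "\<lambda>l. 0"]) (use udd in auto)
  have pos: "0 \<le> Re (\<Sum>l\<in>UNIV. \<Sum>m\<in>UNIV. wirt2 ?u z l m * mk P (\<lambda>l. 0) $ l * cnj (mk P (\<lambda>l. 0) $ m))"
  proof (cases "mk P (\<lambda>l. 0) = 0")
    case True then show ?thesis by simp
  next
    case False
    have zj: "z $ j = 1" unfolding z_def r_def using Xj dj by (simp add: complex_eq_iff)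
    have vj: "mk P (\<lambda>l. 0) $ j = 0" unfolding P_def using dj by (simp add: complex_eq_iff)
    have "posdef_on (wirt2 ?u z) {v. v $ j = 0}"
      using adm zj unfolding admissible_def uu_def by blast
    then have "\<forall>v\<in>{v. v $ j = 0}. v \<noteq> 0 \<longrightarrow> 0 < Re (\<Sum>l\<in>UNIV. \<Sum>m\<in>UNIV. wirt2 ?u z l m * v $ l * cnj (v $ m))"
      unfolding posdef_on_def by blast
    then have "0 < Re (\<Sum>l\<in>UNIV. \<Sum>m\<in>UNIV. wirt2 ?u z l m * mk P (\<lambda>l. 0) $ l * cnj (mk P (\<lambda>l. 0) $ m))"
      using vj False by blast
    then show ?thesis by linarith
  qed
  show ?thesis
    apply (rule exI, rule conjI, rule g2)
    using lin Q pos h2z by linarith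
qed


lemma V_convex:
  fixes \<phi> :: "complex^'i::finite \<Rightarrow> real"
  assumes sm: "smooth_on (- {0}) \<phi>" and adm: "admissible a \<phi>"
    and rot: "\<And>\<theta> z. z \<noteq> 0 \<Longrightarrow> \<phi> (\<chi> q. cis (\<theta> q) * z $ q) = \<phi> z"
    and Xj: "X $ j = 0" and Yj: "Y $ j = 0" and t: "0 \<le> t" "t \<le> 1"
  shows "uu a \<phi> (EE ((1 - t) *\<^sub>R X + t *\<^sub>R Y)) \<le> (1 - t) * uu a \<phi> (EE X) + t * uu a \<phi> (EE Y)"
proof -
  define d where "d = Y - X"
  have dj: "d $ j = 0" using Xj Yj by (simp add: d_def)
  define g where "g s = uu a \<phi> (mk (\<lambda>q. exp (X $ q + s * d $ q)) (\<lambda>q. 0))" for s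
  define g' where "g' s = frechet_derivative (uu a \<phi>) (at (mk (\<lambda>q. exp (X $ q + s * d $ q)) (\<lambda>q. 0)))
                    (mk (\<lambda>q. d $ q * exp (X $ q + s * d $ q)) (\<lambda>q. 0))" for s
  have ud: "uu a \<phi> differentiable at w" if "w \<noteq> 0" for w
    unfolding uu_def by (rule U_diff(1)[OF sm that])
  have dr1: "((\<lambda>s. exp (X $ q + s * d $ q)) has_real_derivative d $ q * exp (X $ q + s0 * d $ q)) (at s0)" for q s0
    by (auto intro!: derivative_eq_intros)
  have gd: "(g has_real_derivative g' s) (at s)" for s
    unfolding g_def g'_def
    by (rule comp_deriv[OF ud[OF mk_nonzero] mk_deriv[OF dr1 DERIV_const]])
  have g'd: "\<exists>D. (g' has_real_derivative D) (at s) \<and> 0 \<le> D" for s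
    unfolding g'_def using g2_nonneg[OF sm adm rot Xj dj, of s] by blast
  have mono: "g' x \<le> g' y" if "x \<le> y" for x y
    by (rule DERIV_nonneg_imp_nondecreasing[OF that]) (use g'd in blast)
  have cv: "convex_on UNIV g"
    by (rule convex_on_realI[of UNIV g g']) (use gd mono in auto)
  have "g ((1 - t) *\<^sub>R 0 + t *\<^sub>R 1) \<le> (1 - t) * g 0 + t * g 1"
    using convex_onD[OF cv, of t 0 1] t by simp
  moreover have "g ((1 - t) *\<^sub>R 0 + t *\<^sub>R 1) = uu a \<phi> (EE ((1 - t) *\<^sub>R X + t *\<^sub>R Y))"
    unfolding g_def EE_def d_def by (simp add: algebra_simps)
  moreover have "g 0 = uu a \<phi> (EE X)" "g 1 = uu a \<phi> (EE Y)"
    unfolding g_def EE_def d_def by simp_all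
  ultimately show ?thesis by simp
qed


lemma phase_in_G:
  fixes idx :: "nat \<Rightarrow> 'i::finite"
  assumes bij: "bij_betw idx {0..<k*n} (UNIV :: 'i set)" and fin: "finite S"
  shows "(\<lambda>z. \<chi> q. if q \<in> S then cis (\<theta> q) * z $ q else z $ q) \<in> Gnk idx n k"
  using fin
proof (induction S rule: finite_induct)
  case empty
  have "(\<lambda>z::complex^'i. \<chi> q. if q \<in> {} then cis (\<theta> q) * z $ q else z $ q) = id"
    by (simp add: fun_eq_iff)
  then show ?case using Gnk.id by simp
next
  case (insert q S)
  obtain p where p: "p < k*n" "idx p = q"
    using bij unfolding bij_betw_def by (metis UNIV_I atLeastLessThan_iff imageE)
  have "phase_coord idx p (\<theta> q) \<circ> (\<lambda>z. \<chi> q. if q \<in> S then cis (\<theta> q) * z $ q else z $ q) \<in> Gnk idx n k"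
    using Gnk.phase[OF insert.IH p(1)] by simp
  moreover have "phase_coord idx p (\<theta> q) \<circ> (\<lambda>z. \<chi> q. if q \<in> S then cis (\<theta> q) * z $ q else z $ q)
     = (\<lambda>z. \<chi> q'. if q' \<in> insert q S then cis (\<theta> q') * z $ q' else z $ q')"
    using insert.hyps(2) p by (auto simp: fun_eq_iff vec_eq_iff phase_coord_def)
  ultimately show ?case by simp
qed

lemma rot_inv:
  fixes idx :: "nat \<Rightarrow> 'i::finite"
  assumes bij: "bij_betw idx {0..<k*n} (UNIV :: 'i set)" and G: "G_invariant idx n k \<phi>"
    and z: "z \<noteq> 0"
  shows "\<phi> (\<chi> q. cis (\<theta> q) * z $ q) = \<phi> z"
proof -
  have "(\<lambda>z. \<chi> q. if q \<in> UNIV then cis (\<theta> q) * z $ q else z $ q) \<in> Gnk idx n k"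
    by (rule phase_in_G[OF bij]) simp
  then show ?thesis using G z unfolding G_invariant_def by auto
qed

definition FF :: "real \<Rightarrow> (complex^'i::finite \<Rightarrow> real) \<Rightarrow> real^'i \<Rightarrow> real" where
  "FF a \<phi> X = uu a \<phi> (EE X) - 2 * a / real CARD('i) * (\<Sum>q\<in>UNIV. X $ q)"

lemma cmod_EE[simp]: "cmod (EE X $ q) = exp (X $ q)"
  by (simp add: EE_def cmod_def)

lemma FF_eq:
  fixes X :: "real^'i::finite"
  shows "\<phi> (EE X) - psi a (EE X) = FF a \<phi> X"
proof -
  have pos: "(\<Sum>q\<in>UNIV. (exp (X $ q))\<^sup>2) > 0"
    by (simp add: sum_pos)
  have "psi a (EE X) = ln ((exp (\<Sum>q\<in>UNIV. X $ q)) powr (2 * a / real CARD('i))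
                 / (\<Sum>q\<in>UNIV. (exp (X $ q))\<^sup>2) powr a)"
    by (simp add: psi_def exp_sum)
  also have "\<dots> = 2 * a / real CARD('i) * (\<Sum>q\<in>UNIV. X $ q) - a * ln (\<Sum>q\<in>UNIV. (exp (X $ q))\<^sup>2)"
    using pos by (simp add: ln_div ln_powr)
  finally show ?thesis by (simp add: FF_def uu_def)
qed

lemma FF_shift:
  fixes X :: "real^'i::finite"
  assumes pf: "proj_fun \<phi>"
  shows "FF a \<phi> (X + c *\<^sub>R 1) = FF a \<phi> X"
proof -
  have E: "EE (X + c *\<^sub>R 1) = complex_of_real (exp c) *s EE X"
    by (simp add: EE_def vec_eq_iff complex_eq_iff exp_add)
  have nz: "EE X \<noteq> 0" unfolding EE_def by (rule mk_nonzero)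
  have ph: "\<phi> (EE (X + c *\<^sub>R 1)) = \<phi> (EE X)"
    unfolding E using pf nz unfolding proj_fun_def by simp
  have S: "(\<Sum>q\<in>UNIV. (cmod (EE (X + c *\<^sub>R 1) $ q))\<^sup>2) = exp c ^ 2 * (\<Sum>q\<in>UNIV. (cmod (EE X $ q))\<^sup>2)"
    by (simp add: sum_distrib_left exp_add power_mult_distrib mult.commute)
  have pos: "(\<Sum>q\<in>UNIV. (cmod (EE X $ q))\<^sup>2) > 0" by (simp add: sum_pos)
  have L: "ln (exp c ^ 2 * (\<Sum>q\<in>UNIV. (cmod (EE X $ q))\<^sup>2)) = 2 * c + ln (\<Sum>q\<in>UNIV. (cmod (EE X $ q))\<^sup>2)"
    using pos by (simp add: ln_mult ln_realpow)
  have Sx: "(\<Sum>q\<in>UNIV. (X + c *\<^sub>R 1) $ q) = (\<Sum>q\<in>UNIV. X $ q) + real CARD('i) * c"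
    by (simp add: sum.distrib)
  show ?thesis
    unfolding FF_def uu_def ph S L Sx by (simp add: field_simps)
qed


lemma FF_convex:
  fixes \<phi> :: "complex^'i::finite \<Rightarrow> real"
  assumes sm: "smooth_on (- {0}) \<phi>" and adm: "admissible a \<phi>"
    and rot: "\<And>\<theta> z. z \<noteq> 0 \<Longrightarrow> \<phi> (\<chi> q. cis (\<theta> q) * z $ q) = \<phi> z"
    and pf: "proj_fun \<phi>"
  shows "convex_on UNIV (FF a \<phi>)"
proof (rule convex_onI)
  fix t :: real and X Y :: "real^'i"
  assume t: "0 < t" "t < 1"
  define j :: 'i where "j = undefined"
  define PX where "PX = X + (- (X $ j)) *\<^sub>R 1"
  define PY where "PY = Y + (- (Y $ j)) *\<^sub>R 1"
  have PXj: "PX $ j = 0" "PY $ j = 0" by (simp_all add: PX_def PY_def)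
  have FX: "FF a \<phi> X = FF a \<phi> PX" "FF a \<phi> Y = FF a \<phi> PY"
    unfolding PX_def PY_def using FF_shift[OF pf, of a X "- (X $ j)"] FF_shift[OF pf, of a Y "- (Y $ j)"]
    by (simp_all only:)
  have eq: "(1 - t) *\<^sub>R X + t *\<^sub>R Y = ((1 - t) *\<^sub>R PX + t *\<^sub>R PY) + ((1 - t) * X $ j + t * Y $ j) *\<^sub>R 1"
    by (simp add: PX_def PY_def vec_eq_iff algebra_simps)
  have "FF a \<phi> ((1 - t) *\<^sub>R X + t *\<^sub>R Y) = FF a \<phi> ((1 - t) *\<^sub>R PX + t *\<^sub>R PY)"
    unfolding eq using FF_shift[OF pf] by simp
  also have "\<dots> \<le> (1 - t) * FF a \<phi> PX + t * FF a \<phi> PY"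
  proof -
    have V: "uu a \<phi> (EE ((1 - t) *\<^sub>R PX + t *\<^sub>R PY)) \<le> (1 - t) * uu a \<phi> (EE PX) + t * uu a \<phi> (EE PY)"
      by (rule V_convex[OF sm adm rot PXj]) (use t in auto)
    have S: "(\<Sum>q\<in>UNIV. ((1 - t) *\<^sub>R PX + t *\<^sub>R PY) $ q) = (1 - t) * (\<Sum>q\<in>UNIV. PX $ q) + t * (\<Sum>q\<in>UNIV. PY $ q)"
      by (simp add: sum.distrib sum_distrib_left)
    have L: "cc * ((1 - t) * SX + t * SY) = (1 - t) * (cc * SX) + t * (cc * SY)" for cc SX SY :: real
      by (simp add: algebra_simps)
    show ?thesis unfolding FF_def S L using V by (simp add: right_diff_distrib)
  qed
  finally show "FF a \<phi> ((1 - t) *\<^sub>R X + t *\<^sub>R Y) \<le> (1 - t) * FF a \<phi> X + t * FF a \<phi> Y"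
    using FX by simp
qed simp


definition vv :: "(nat \<Rightarrow> 'i::finite) \<Rightarrow> nat \<Rightarrow> (nat \<Rightarrow> real) \<Rightarrow> real^'i" where
  "vv idx N h = (\<chi> q. h (inv_into {0..<N} idx q))"

lemma inv_lt:
  assumes "bij_betw idx {0..<N} (UNIV :: 'i::finite set)"
  shows "inv_into {0..<N} idx q < N"
proof -
  have "inv_into {0..<N} idx q \<in> {0..<N}"
    using bij_betw_inv_into[OF assms] unfolding bij_betw_def by auto
  then show ?thesis by simp
qed

lemma vv_idx:
  assumes "bij_betw idx {0..<N} (UNIV :: 'i::finite set)" "m < N"
  shows "vv idx N h $ idx m = h m"
  using assms unfolding vv_def bij_betw_def by (simp add: inv_into_f_f)

lemma sum_inv:
  assumes "bij_betw idx {0..<N} (UNIV :: 'i::finite set)"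
  shows "(\<Sum>q\<in>(UNIV::'i set). G (inv_into {0..<N} idx q)) = (\<Sum>m\<in>{0..<N}. G m)"
  by (rule sum.reindex_bij_betw[OF bij_betw_inv_into[OF assms]])

lemma FF_vv:
  fixes \<phi> :: "complex^'i::finite \<Rightarrow> real"
  assumes "bij_betw idx {0..<N} (UNIV :: 'i set)"
  shows "FF a \<phi> (vv idx N h) = a * ln (\<Sum>m\<in>{0..<N}. (exp (h m))\<^sup>2) + \<phi> (EE (vv idx N h))
           - 2 * a / real CARD('i) * (\<Sum>m\<in>{0..<N}. h m)"
proof -
  have "(\<Sum>q\<in>UNIV. (cmod (EE (vv idx N h) $ q))\<^sup>2) = (\<Sum>m\<in>{0..<N}. (exp (h m))\<^sup>2)"
    using sum_inv[OF assms, of "\<lambda>m. (exp (h m))\<^sup>2"] by (simp add: vv_def)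
  moreover have "(\<Sum>q\<in>UNIV. vv idx N h $ q) = (\<Sum>m\<in>{0..<N}. h m)"
    using sum_inv[OF assms, of h] by (simp add: vv_def)
  ultimately show ?thesis by (simp add: FF_def uu_def)
qed

lemma perm_EE:
  fixes h :: "nat \<Rightarrow> real"
  assumes "bij_betw idx {0..<N} (UNIV :: 'i::finite set)" "\<And>m. m < N \<Longrightarrow> \<sigma> m < N"
  shows "perm_coords idx N \<sigma> (EE (vv idx N h)) = EE (vv idx N (h \<circ> \<sigma>))"
proof -
  have "perm_coords idx N \<sigma> (EE (vv idx N h)) $ q = EE (vv idx N (h \<circ> \<sigma>)) $ q" for q
  proof -
    have lt: "\<sigma> (inv_into {0..<N} idx q) < N" using assms(2) inv_lt[OF assms(1)] by blast
    have "perm_coords idx N \<sigma> (EE (vv idx N h)) $ q = EE (vv idx N h) $ idx (\<sigma> (inv_into {0..<N} idx q))"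
      by (simp add: perm_coords_def)
    also have "\<dots> = Complex (exp (h (\<sigma> (inv_into {0..<N} idx q)))) 0"
      unfolding EE_def mk_nth vv_idx[OF assms(1) lt] ..
    also have "\<dots> = EE (vv idx N (h \<circ> \<sigma>)) $ q"
      unfolding EE_def mk_nth by (simp add: vv_def)
    finally show ?thesis .
  qed
  then show ?thesis by (simp add: vec_eq_iff)
qed

lemma FF_perm:
  fixes \<phi> :: "complex^'i::finite \<Rightarrow> real" and h :: "nat \<Rightarrow> real" and \<sigma> :: "nat \<Rightarrow> nat"
  assumes bij: "bij_betw idx {0..<N} (UNIV :: 'i set)" and s: "bij_betw \<sigma> {0..<N} {0..<N}"
    and inv: "\<And>z. z \<noteq> 0 \<Longrightarrow> \<phi> (perm_coords idx N \<sigma> z) = \<phi> z"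
  shows "FF a \<phi> (vv idx N (h \<circ> \<sigma>)) = FF a \<phi> (vv idx N h)"
proof -
  have lt: "\<And>m. m < N \<Longrightarrow> \<sigma> m < N" using s unfolding bij_betw_def by auto
  have "\<phi> (EE (vv idx N (h \<circ> \<sigma>))) = \<phi> (EE (vv idx N h))"
  proof -
    have nz: "EE (vv idx N h) \<noteq> 0" unfolding EE_def by (rule mk_nonzero)
    show ?thesis using perm_EE[OF bij lt, where h = h] inv[OF nz] by simp
  qed
  moreover have "(\<Sum>m\<in>{0..<N}. G (\<sigma> m)) = (\<Sum>m\<in>{0..<N}. G m)" for G :: "nat \<Rightarrow> real"
    by (rule sum.reindex_bij_betw[OF s])
  note S = this[of "\<lambda>m. (exp (h m))\<^sup>2"] this[of h]
  ultimately show ?thesis unfolding FF_vv[OF bij] using S by simp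
qed

lemma block_swap_lt:
  assumes "n \<ge> 1" "h < k" "m < k * n"
  shows "block_swap n 0 h m < k * n"
proof -
  have "h * n + m mod n < k * n"
  proof -
    have "m mod n < n" using assms(1) by simp
    moreover have "(h + 1) * n \<le> k * n" using assms(2) by (intro mult_right_mono) auto
    ultimately show ?thesis by (simp add: algebra_simps)
  qed
  moreover have "m mod n < k * n" using assms by (meson le_less_trans mod_less_eq_dividend)
  ultimately show ?thesis using assms unfolding block_swap_def by auto
qed

lemma block_swap_invol:
  assumes "n \<ge> 1" "m < k * n"
  shows "block_swap n 0 h (block_swap n 0 h m) = m"
proof -
  have r: "(h * n + m mod n) div n = h" "(h * n + m mod n) mod n = m mod n" using assms(1) by simp_all
  have d: "m mod n div n = 0" "m mod n mod n = m mod n" using assms(1) by simp_all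
  show ?thesis
  proof (cases "m div n = 0")
    case True
    then have "m = m mod n" by (metis div_mult_mod_eq mult_0 add_0)
    then show ?thesis using True r unfolding block_swap_def by auto
  next
    case False
    show ?thesis
    proof (cases "m div n = h")
      case True
      then have "m = h * n + m mod n" by (metis div_mult_mod_eq)
      then show ?thesis using True False d unfolding block_swap_def by auto
    next
      case False2: False
      then show ?thesis using False unfolding block_swap_def by auto
    qed
  qed
qed

lemma block_swap_bij:
  assumes "n \<ge> 1" "h < k"
  shows "bij_betw (block_swap n 0 h) {0..<k*n} {0..<k*n}"
proof (rule bij_betw_byWitness[where f' = "block_swap n 0 h"])
  show "\<forall>a\<in>{0..<k * n}. block_swap n 0 h (block_swap n 0 h a) = a"
    using block_swap_invol[OF assms(1)] by simp
  then show "\<forall>a\<in>{0..<k * n}. block_swap n 0 h (block_swap n 0 h a) = a" .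
  show "block_swap n 0 h ` {0..<k * n} \<subseteq> {0..<k * n}"
    using block_swap_lt[OF assms] by auto
  then show "block_swap n 0 h ` {0..<k * n} \<subseteq> {0..<k * n}" .
qed

lemma block_swap_val:
  assumes "n \<ge> 1" "h < k" "m < k * n"
  shows "(block_swap n 0 h m < n) = (h = m div n)"
proof -
  have lt: "(x < n) = (x div n = 0)" for x using assms(1) by (simp add: div_eq_0_iff)
  have r: "(h * n + m mod n) div n = h" using assms(1) by simp
  show ?thesis
  proof (cases "m div n = 0")
    case True
    then have "block_swap n 0 h m = h * n + m mod n" by (simp add: block_swap_def)
    then show ?thesis using True r lt by metis
  next
    case False
    show ?thesis
    proof (cases "m div n = h")
      case True
      then have "block_swap n 0 h m = m mod n" using False by (simp add: block_swap_def)
      then show ?thesis using True assms(1) by simp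
    next
      case False2: False
      then have "block_swap n 0 h m = m" using False by (simp add: block_swap_def)
      then show ?thesis using False False2 lt by metis
    qed
  qed
qed


lemma sum_if_eq:
  assumes "b < K"
  shows "(\<Sum>h\<in>{0..<K}. (if h = b then x else y)) = x + (real K - 1) * (y::real)"
proof -
  have "(\<Sum>h\<in>{0..<K}. (if h = b then x else y)) = (\<Sum>h\<in>{0..<K}. y + (if h = b then x - y else 0))"
    by (rule sum.cong) auto
  also have "\<dots> = real K * y + (x - y)" using assms by (simp add: sum.distrib)
  finally show ?thesis by (simp add: algebra_simps)
qed

lemma h0_transpose:
  fixes p n i :: nat
  assumes "p < n"
  shows "(\<lambda>m. if m = 0 then 0 else if m < n then ln \<zeta> else (ln \<gamma>::real)) (Transposition.transpose 0 p i)
       = (if i < n then (if p = i then 0 else ln \<zeta>) else ln \<gamma>)"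
proof -
  have "0 < n" using assms by linarith
  then show ?thesis using assms by (auto simp: Transposition.transpose_def)
qed

theorem lemma3:
  fixes \<phi> :: "complex^'i \<Rightarrow> real" and idx :: "nat \<Rightarrow> 'i" and k n :: nat and a :: real
  assumes "k \<ge> 2" and "n \<ge> 1"
    and "bij_betw idx {0..<k*n} (UNIV :: 'i set)"
    and "a > 0"
    and "proj_fun \<phi>"
    and "smooth_on (- {0}) \<phi>"
    and "admissible a \<phi>"
    and "G_invariant idx n k \<phi>"
    and "0 < \<zeta>" and "\<zeta> \<le> 1" and "0 < \<gamma>" and "\<gamma> \<le> 1"
  shows "\<phi> (pt idx n (k*n) \<zeta> \<gamma>) - psi a (pt idx n (k*n) \<zeta> \<gamma>)
         \<ge> \<phi> (pt idx n (k*n) 1 1) - psi a (pt idx n (k*n) 1 1)"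
proof -
  note bij = assms(3) and pf = assms(5) and sm = assms(6) and adm = assms(7) and G = assms(8)
  define N where "N = k * n"
  have bijN: "bij_betw idx {0..<N} (UNIV :: 'i set)" using bij by (simp add: N_def)
  have rot: "\<And>\<theta> z. z \<noteq> 0 \<Longrightarrow> \<phi> (\<chi> q. cis (\<theta> q) * z $ q) = \<phi> z"
    using rot_inv[OF bij G] by blast
  have cvx: "convex_on UNIV (FF a \<phi>)" by (rule FF_convex[OF sm adm rot pf])
  have n0: "n > 0" "real n > 0" using assms(2) by auto
  have k0: "k > 0" "real k > 0" using assms(1) by auto
  have nN: "n \<le> N" using assms(1) by (simp add: N_def)
  define h0 where "h0 = (\<lambda>m::nat. if m = 0 then 0 else if m < n then ln \<zeta> else (ln \<gamma>::real))"
  define \<alpha> where "\<alpha> = (real n - 1) / real n * ln \<zeta>"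
  define h1 where "h1 = (\<lambda>m::nat. if m < n then \<alpha> else ln \<gamma>)"
  define \<beta> where "\<beta> = (\<alpha> + (real k - 1) * ln \<gamma>) / real k"
  have pt1: "pt idx n (k*n) \<zeta> \<gamma> = EE (vv idx N h0)"
    using assms(9,11)
    by (simp add: vec_eq_iff pt_def EE_def vv_def h0_def N_def Let_def complex_eq_iff)
  have pt2: "pt idx n (k*n) 1 1 = EE 0"
    by (simp add: vec_eq_iff pt_def EE_def Let_def complex_eq_iff)
  have goal_eq: "\<phi> (pt idx n (k*n) \<zeta> \<gamma>) - psi a (pt idx n (k*n) \<zeta> \<gamma>) = FF a \<phi> (vv idx N h0)"
    "\<phi> (pt idx n (k*n) 1 1) - psi a (pt idx n (k*n) 1 1) = FF a \<phi> 0"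
    unfolding pt1 pt2 FF_eq by simp_all
  have inv_tr: "FF a \<phi> (vv idx N (h \<circ> Transposition.transpose 0 p)) = FF a \<phi> (vv idx N h)"
    if "p < n" for p h
  proof (rule FF_perm[OF bijN])
    show "bij_betw (Transposition.transpose 0 p) {0..<N} {0..<N}"
      by (rule bij_betw_transpose_iff) (use that nN n0 in auto)
    have "perm_coords idx (k*n) (Transposition.transpose 0 p) \<circ> id \<in> Gnk idx n k"
      by (rule Gnk.transp[OF Gnk.id]) (use that nN n0 in \<open>auto simp: N_def\<close>, use that nN N_def in linarith)
    then show "\<And>z. z \<noteq> 0 \<Longrightarrow> \<phi> (perm_coords idx N (Transposition.transpose 0 p) z) = \<phi> z"
      using G unfolding G_invariant_def N_def by auto
  qed
  have inv_bs: "FF a \<phi> (vv idx N (h \<circ> block_swap n 0 b)) = FF a \<phi> (vv idx N h)"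
    if "b < k" for b h
  proof (rule FF_perm[OF bijN])
    show "bij_betw (block_swap n 0 b) {0..<N} {0..<N}"
      using block_swap_bij[OF assms(2) that] by (simp add: N_def)
    have "perm_coords idx (k*n) (block_swap n 0 b) \<circ> id \<in> Gnk idx n k"
      by (rule Gnk.swap[OF Gnk.id]) (use that k0 in auto)
    then show "\<And>z. z \<noteq> 0 \<Longrightarrow> \<phi> (perm_coords idx N (block_swap n 0 b) z) = \<phi> z"
      using G unfolding G_invariant_def N_def by auto
  qed
  have avg1: "(\<Sum>p\<in>{0..<n}. (1 / real n) *\<^sub>R vv idx N (h0 \<circ> Transposition.transpose 0 p)) = vv idx N h1"
  proof -
    have "(\<Sum>p\<in>{0..<n}. (1 / real n) * h0 (Transposition.transpose 0 p i)) = h1 i" for i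
    proof (cases "i < n")
      case True
      have "(\<Sum>p\<in>{0..<n}. (1 / real n) * h0 (Transposition.transpose 0 p i))
          = (1 / real n) * (\<Sum>p\<in>{0..<n}. (if p = i then 0 else ln \<zeta>))"
        unfolding sum_distrib_left h0_def using True
        by (intro sum.cong refl) (simp add: h0_transpose)
      also have "\<dots> = (1 / real n) * (0 + (real n - 1) * ln \<zeta>)"
        using sum_if_eq[OF True] by simp
      also have "\<dots> = h1 i" using True by (simp add: h1_def \<alpha>_def)
      finally show ?thesis .
    next
      case False
      have "(\<Sum>p\<in>{0..<n}. (1 / real n) * h0 (Transposition.transpose 0 p i))
          = (\<Sum>p\<in>{0..<n}. (1 / real n) * ln \<gamma>)"
        unfolding h0_def using False
        by (intro sum.cong refl) (simp add: h0_transpose)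
      also have "\<dots> = h1 i" using False n0 by (simp add: h1_def)
      finally show ?thesis .
    qed
    then show ?thesis by (simp add: vec_eq_iff vv_def)
  qed
  have J1: "FF a \<phi> (vv idx N h1) \<le> FF a \<phi> (vv idx N h0)"
  proof -
    have "FF a \<phi> (vv idx N h1) \<le> (\<Sum>p\<in>{0..<n}. (1 / real n) * FF a \<phi> (vv idx N (h0 \<circ> Transposition.transpose 0 p)))"
      unfolding avg1[symmetric]
      by (rule convex_on_sum[OF _ _ cvx]) (use n0 in auto)
    also have "\<dots> = (\<Sum>p\<in>{0..<n}. (1 / real n) * FF a \<phi> (vv idx N h0))"
      by (intro sum.cong refl) (simp add: inv_tr)
    also have "\<dots> = FF a \<phi> (vv idx N h0)" using n0 by simp
    finally show ?thesis .
  qed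
  have avg2: "(\<Sum>b\<in>{0..<k}. (1 / real k) *\<^sub>R vv idx N (h1 \<circ> block_swap n 0 b)) = \<beta> *\<^sub>R 1"
  proof -
    have "(\<Sum>b\<in>{0..<k}. (1 / real k) * h1 (block_swap n 0 b i)) = \<beta>" if i: "i < N" for i
    proof -
      have idk: "i div n < k" using i by (simp add: N_def less_mult_imp_div_less)
      have "(\<Sum>b\<in>{0..<k}. (1 / real k) * h1 (block_swap n 0 b i))
          = (1 / real k) * (\<Sum>b\<in>{0..<k}. (if b = i div n then \<alpha> else ln \<gamma>))"
        unfolding sum_distrib_left
      proof (intro sum.cong refl)
        fix b assume "b \<in> {0..<k}"
        then have "(block_swap n 0 b i < n) = (b = i div n)"
          using block_swap_val[OF assms(2), of b k i] i by (simp add: N_def)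
        then show "1 / real k * h1 (block_swap n 0 b i) = 1 / real k * (if b = i div n then \<alpha> else ln \<gamma>)"
          by (simp add: h1_def)
      qed
      also have "\<dots> = \<beta>" using sum_if_eq[OF idk] by (simp add: \<beta>_def)
      finally show ?thesis .
    qed
    then show ?thesis using inv_lt[OF bijN] by (simp add: vec_eq_iff vv_def)
  qed
  have J2: "FF a \<phi> (\<beta> *\<^sub>R 1) \<le> FF a \<phi> (vv idx N h1)"
  proof -
    have "FF a \<phi> (\<beta> *\<^sub>R 1) \<le> (\<Sum>b\<in>{0..<k}. (1 / real k) * FF a \<phi> (vv idx N (h1 \<circ> block_swap n 0 b)))"
      unfolding avg2[symmetric]
      by (rule convex_on_sum[OF _ _ cvx]) (use k0 in auto)
    also have "\<dots> = (\<Sum>b\<in>{0..<k}. (1 / real k) * FF a \<phi> (vv idx N h1))"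
      by (intro sum.cong refl) (simp add: inv_bs)
    also have "\<dots> = FF a \<phi> (vv idx N h1)" using k0 by simp
    finally show ?thesis .
  qed
  have J3: "FF a \<phi> (\<beta> *\<^sub>R 1) = FF a \<phi> 0"
    using FF_shift[OF pf, of a 0 \<beta>] by simp
  show ?thesis unfolding goal_eq using J1 J2 J3 by simp
qed


end
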